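(* Let $\mathfrak a=\mathbb H^p$ and $V=\mathrm{Span}(J_1,J_2,J_3)$ with $J_1=\mathrm{diag}(\lambda_1L_{\mathrm i},\dots,\lambda_pL_{\mathrm i})$, $J_2=\mathrm{diag}(\mu_1L_{\mathrm j},\dots,\mu_pL_{\mathrm j})$, $J_3=\mathrm{diag}(\mu_1L_{\mathrm k},\dots,\mu_pL_{\mathrm k})$, where all $\lambda_s,\mu_s\in\mathbb R$ are nonzero. Let $\langle\cdot,\cdot\rangle$ be an inner product on $V$ for which $J_1,J_2,J_3$ are mutually orthogonal and $\|J_2\|=\|J_3\|$. Then $(V,\langle\cdot,\cdot\rangle)$ is a WS-pair.
   Context: $\mathbb H$ denotes the quaternions, $\mathrm i,\mathrm j,\mathrm k$ the standard basis of $\mathrm{Im}\,\mathbb H$, $L_q$ left multiplication by $q$, and $\mathrm{diag}$ block-diagonal operators on $\mathbb H^p$. For a Euclidean space $\mathfrak a$, a subspace $V\subset\mathfrak{so}(\mathfrak a)$ with inner product $\langle\cdot,\cdot\rangle$ defines the metric 2-step nilpotent Lie algebra $\mathfrak n=V\oplus\mathfrak a$ (orthogonal sum, $V$ central, $\langle J,[X,Y]\rangle=\langle JX,Y\rangle$). It is a WS-pair if the corresponding simply connected nilpotent Lie group with left-invariant metric is weakly symmetric. Standing fact: this holds iff for every $J\in V$, $X\in\mathfrak a$ there is $N\in\mathcal N(V)=\{N\in O(\mathfrak a): NVN^{-1}\subset V$, $K\mapsto NKN^{-1}$ orthogonal on $(V,\langle\cdot,\cdot\rangle)\}$ with $NX=-X$,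 $NJ=-JN$. *)

theory Defs
  imports "HOL-Analysis.Analysis"
begin

text \<open>Quaternions modelled as real^4 with coordinates (1, i, j, k) at indices 1,2,3,4.\<close>

definition qmult :: "real^4 \<Rightarrow> real^4 \<Rightarrow> real^4" where
  "qmult q r = vector
     [ q$1 * r$1 - q$2 * r$2 - q$3 * r$3 - q$4 * r$4,
       q$1 * r$2 + q$2 * r$1 + q$3 * r$4 - q$4 * r$3,
       q$1 * r$3 - q$2 * r$4 + q$3 * r$1 + q$4 * r$2,
       q$1 * r$4 + q$2 * r$3 - q$3 * r$2 + q$4 * r$1 ]"

definition qi :: "real^4" where "qi = vector [0, 1, 0, 0]"
definition qj :: "real^4" where "qj = vector [0, 0, 1, 0]"
definition qk :: "real^4" where "qk = vector [0, 0, 0, 1]"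

definition Lmul :: "real^4 \<Rightarrow> real^4 \<Rightarrow> real^4" where
  "Lmul q = (\<lambda>r. qmult q r)"

definition diagop :: "('p::finite \<Rightarrow> real) \<Rightarrow> (real^4 \<Rightarrow> real^4) \<Rightarrow> real^4^'p \<Rightarrow> real^4^'p" where
  "diagop c L = (\<lambda>x. \<chi> s. c s *\<^sub>R L (x$s))"

text \<open>An inner product on a set V of operators (assumed to be a linear subspace).\<close>
definition inner_product_on :: "('a::real_vector \<Rightarrow> 'a) set \<Rightarrow> (('a \<Rightarrow> 'a) \<Rightarrow> ('a \<Rightarrow> 'a) \<Rightarrow> real) \<Rightarrow> bool" where
  "inner_product_on V ip \<longleftrightarrow>
     (\<forall>K\<in>V. \<forall>K'\<in>V. \<forall>K''\<in>V. \<forall>a b.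
        ip (\<lambda>x. a *\<^sub>R K x + b *\<^sub>R K' x) K'' = a * ip K K'' + b * ip K' K'') \<and>
     (\<forall>K\<in>V. \<forall>K'\<in>V. ip K K' = ip K' K) \<and>
     (\<forall>K\<in>V. K \<noteq> (\<lambda>x. 0) \<longrightarrow> ip K K > 0)"

definition normalizer :: "('a::real_inner \<Rightarrow> 'a) set \<Rightarrow> (('a \<Rightarrow> 'a) \<Rightarrow> ('a \<Rightarrow> 'a) \<Rightarrow> real) \<Rightarrow> ('a \<Rightarrow> 'a) set" where
  "normalizer V ip = {N. orthogonal_transformation N \<and>
      (\<forall>K\<in>V. N \<circ> K \<circ> inv N \<in> V) \<and>
      (\<forall>K\<in>V. \<forall>K'\<in>V. ip (N \<circ> K \<circ> inv N) (N \<circ> K' \<circ> inv N) = ip K K')}"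

text \<open>WS-pair, via the standing characterization.\<close>
definition WS_pair :: "('a::real_inner \<Rightarrow> 'a) set \<Rightarrow> (('a \<Rightarrow> 'a) \<Rightarrow> ('a \<Rightarrow> 'a) \<Rightarrow> real) \<Rightarrow> bool" where
  "WS_pair V ip \<longleftrightarrow>
     (\<forall>J\<in>V. \<forall>X. \<exists>N\<in>normalizer V ip. N X = - X \<and> (\<forall>Y. N (J Y) = - J (N Y)))"

end

theory Submission imports Defs begin

lemma vector_4 [simp]:
 "(vector [x,y,z,w] ::('a::zero)^4)$1 = x"
 "(vector [x,y,z,w] ::('a::zero)^4)$2 = y"
 "(vector [x,y,z,w] ::('a::zero)^4)$3 = z"
 "(vector [x,y,z,w] ::('a::zero)^4)$4 = w"
  unfolding vector_def by simp_all

lemma q_eq_iff: "(q::real^4) = r \<longleftrightarrow> q$1 = r$1 \<and> q$2 = r$2 \<and> q$3 = r$3 \<and> q$4 = r$4"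
  by (simp add: vec_eq_iff forall_4)

lemma qmult_comp [simp]:
  "qmult q r $ 1 = q$1 * r$1 - q$2 * r$2 - q$3 * r$3 - q$4 * r$4"
  "qmult q r $ 2 = q$1 * r$2 + q$2 * r$1 + q$3 * r$4 - q$4 * r$3"
  "qmult q r $ 3 = q$1 * r$3 - q$2 * r$4 + q$3 * r$1 + q$4 * r$2"
  "qmult q r $ 4 = q$1 * r$4 + q$2 * r$3 - q$3 * r$2 + q$4 * r$1"
  by (simp_all add: qmult_def)

definition qconj :: "real^4 \<Rightarrow> real^4" where
  "qconj q = vector [q$1, -q$2, -q$3, -q$4]"
definition qone :: "real^4" where "qone = vector [1,0,0,0]"

lemma qconj_comp [simp]: "qconj q $1 = q$1" "qconj q $2 = - q$2" "qconj q $3 = - q$3" "qconj q $4 = - q$4"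
  by (simp_all add: qconj_def)
lemma qone_comp [simp]: "qone $1 = 1" "qone $2 = 0" "qone $3 = 0" "qone $4 = 0"
  by (simp_all add: qone_def)

lemma qmult_assoc: "qmult (qmult a b) c = qmult a (qmult b c)"
  by (simp add: q_eq_iff algebra_simps)
lemma qmult_one [simp]: "qmult qone q = q" "qmult q qone = q"
  by (simp_all add: q_eq_iff)
lemma qmult_scaleR [simp]: "qmult (t *\<^sub>R a) b = t *\<^sub>R qmult a b" "qmult a (t *\<^sub>R b) = t *\<^sub>R qmult a b"
  by (simp_all add: q_eq_iff algebra_simps)
lemma qmult_add: "qmult (a + b) c = qmult a c + qmult b c" "qmult a (b + c) = qmult a b + qmult a c"
  by (simp_all add: q_eq_iff algebra_simps)
lemma qmult_zero [simp]: "qmult 0 b = 0" "qmult a 0 = 0"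
  by (simp_all add: q_eq_iff)
lemma qmult_minus: "qmult (- a) b = - qmult a b" "qmult a (-b) = - qmult a b"
  by (simp_all add: q_eq_iff)

lemma qnorm2: "(norm (q::real^4))^2 = q$1^2 + q$2^2 + q$3^2 + q$4^2"
  by (simp add: norm_vec_def L2_set_def sum_4)

lemma qmult_conj: "qmult q (qconj q) = (norm q)^2 *\<^sub>R qone" "qmult (qconj q) q = (norm q)^2 *\<^sub>R qone"
  using qnorm2[of q] by (simp_all add: q_eq_iff power2_eq_square algebra_simps)

lemma qnorm_mult: "norm (qmult q r) = norm q * norm r"
proof -
  have "(norm (qmult q r))^2 = (norm q * norm r)^2"
    unfolding power_mult_distrib qnorm2 by (simp add: power2_eq_square algebra_simps)
  then show ?thesis by (simp add: power2_eq_iff_nonneg)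
qed

lemma linear_qmult_left: "linear (\<lambda>x. qmult q x)"
  by (rule linearI) (simp_all add: qmult_add)

lemma qnorm_conj [simp]: "norm (qconj q) = norm q"
  by (simp add: norm_vec_def L2_set_def sum_4)

lemma qunit_lemmas:
  assumes "norm q = 1"
  shows "qmult q (qmult (qconj q) y) = y" "qmult (qconj q) (qmult q y) = y"
    "qmult q (qconj q) = qone" "qmult (qconj q) q = qone"
proof -
  show 3: "qmult q (qconj q) = qone" "qmult (qconj q) q = qone" using assms qmult_conj[of q] by auto
  show "qmult q (qmult (qconj q) y) = y" using 3 by (metis qmult_assoc qmult_one(1))
  show "qmult (qconj q) (qmult q y) = y" using 3 by (metis qmult_assoc qmult_one(1))
qed

lemma qmult_conj_cancel: "qmult X (qmult (qconj X) Y) = (norm X)^2 *\<^sub>R Y"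
  by (metis qmult_assoc qmult_conj(1) qmult_one(1) qmult_scaleR(1))

lemma conj_u:
  assumes "u3^2 + u4^2 = 1"
  shows "qmult (qmult (vector [0,0,u3,u4]) (vector [0,A,B,C])) (qconj (vector [0,0,u3,u4]))
     = vector [0, -A, (2*u3^2-1)*B + 2*u3*u4*C, 2*u3*u4*B - (2*u3^2-1)*C]"
  using assms unfolding q_eq_iff by (simp add: power2_eq_square) algebra

definition Kop where "Kop J1 J2 J3 a b c = (\<lambda>x. a *\<^sub>R J1 x + b *\<^sub>R J2 x + c *\<^sub>R J3 x)"

lemma ip_formula:
  assumes V: "V = {(\<lambda>x. a *\<^sub>R J1 x + b *\<^sub>R J2 x + c *\<^sub>R J3 x) | a b c. True}"
    and ipo: "inner_product_on V ip"
    and o: "ip J1 J2 = 0" "ip J1 J3 = 0" "ip J2 J3 = 0"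
    and e: "ip J2 J2 = ip J3 J3"
  shows "ip (Kop J1 J2 J3 a b c) (Kop J1 J2 J3 a' b' c') = a*a' * ip J1 J1 + (b*b'+c*c') * ip J2 J2"
proof -
  have KV: "Kop J1 J2 J3 a b c \<in> V" for a b c unfolding V Kop_def by blast
  have J1: "J1 = Kop J1 J2 J3 1 0 0" and J2: "J2 = Kop J1 J2 J3 0 1 0" and J3: "J3 = Kop J1 J2 J3 0 0 1"
    by (simp_all add: Kop_def)
  have J1V: "J1 \<in> V" and J2V: "J2 \<in> V" and J3V: "J3 \<in> V" using KV J1 J2 J3 by metis+
  have lin: "\<And>K K' K'' s t. K \<in> V \<Longrightarrow> K' \<in> V \<Longrightarrow> K'' \<in> V \<Longrightarrow>
        ip (\<lambda>x. s *\<^sub>R K x + t *\<^sub>R K' x) K'' = s * ip K K'' + t * ip K' K''"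
    using ipo unfolding inner_product_on_def by blast
  have sym: "\<And>K K'. K \<in> V \<Longrightarrow> K' \<in> V \<Longrightarrow> ip K K' = ip K' K"
    using ipo unfolding inner_product_on_def by blast
  have L: "ip (Kop J1 J2 J3 a b c) L = a * ip J1 L + b * ip J2 L + c * ip J3 L" if "L \<in> V" for a b c L
  proof -
    have e1: "Kop J1 J2 J3 a b c = (\<lambda>x. a *\<^sub>R J1 x + 1 *\<^sub>R Kop J1 J2 J3 0 b c x)"
      by (simp add: Kop_def add.assoc)
    have e2: "Kop J1 J2 J3 0 b c = (\<lambda>x. b *\<^sub>R J2 x + c *\<^sub>R J3 x)"
      by (simp add: Kop_def)
    show ?thesis using lin[OF J1V KV that, of a 1 0 b c] lin[OF J2V J3V that, of b c] e1 e2 by simp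
  qed
  have s21: "ip J2 J1 = 0" "ip J3 J1 = 0" "ip J3 J2 = 0" using sym J1V J2V J3V o by metis+
  have R: "ip J (Kop J1 J2 J3 a' b' c') = a' * ip J J1 + b' * ip J J2 + c' * ip J J3" if "J \<in> V" for J
    using L[OF that, of a' b' c'] sym[OF that KV] sym[OF that J1V] sym[OF that J2V] sym[OF that J3V]
    by (metis KV L sym that)
  show ?thesis
    using L[OF KV, of a b c a' b' c'] R[OF J1V] R[OF J2V] R[OF J3V] o s21 e
    by (simp add: algebra_simps)
qed

definition Nop :: "real^4 \<Rightarrow> ('p::finite \<Rightarrow> real^4) \<Rightarrow> real^4^'p \<Rightarrow> real^4^'p" where
  "Nop u v = (\<lambda>x. \<chi> s. qmult (qmult u (x$s)) (v s))"

lemma Nop_inv: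
  assumes "norm u = 1" "\<And>s. norm (v s) = 1"
  shows "Nop u v (Nop (qconj u) (\<lambda>s. qconj (v s)) x) = x"
    "Nop (qconj u) (\<lambda>s. qconj (v s)) (Nop u v x) = x"
  using qunit_lemmas[OF assms(1)] qunit_lemmas[OF assms(2)]
  by (auto simp: vec_eq_iff[of "Nop _ _ _"] vec_eq_iff[of "\<chi> s. _ s"] Nop_def qmult_assoc)

lemma Nop_conj:
  assumes "norm u = 1" "\<And>s. norm (v s) = 1"
  shows "Nop u v (\<chi> s. qmult (Q s) (Nop (qconj u) (\<lambda>s. qconj (v s)) x $ s))
     = (\<chi> s. qmult (qmult (qmult u (Q s)) (qconj u)) (x$s))"
  using qunit_lemmas[OF assms(1)] qunit_lemmas[OF assms(2)]
  by (auto simp: vec_eq_iff[of "Nop _ _ _"] vec_eq_iff[of "\<chi> s. _ s"] Nop_def qmult_assoc)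

lemma Nop_orth:
  assumes "norm u = 1" "\<And>s. norm (v s) = 1"
  shows "orthogonal_transformation (Nop u v)"
  unfolding orthogonal_transformation
proof
  show "linear (Nop u v)"
    by (rule linearI) (simp_all add: Nop_def vec_eq_iff qmult_add)
  show "\<forall>x. norm (Nop u v x) = norm x"
  proof
    fix x
    have "\<And>s. norm (Nop u v x $ s) = norm (x$s)" using assms by (simp add: Nop_def qnorm_mult)
    then show "norm (Nop u v x) = norm x" by (simp add: norm_vec_def[of "Nop u v x"] norm_vec_def[of x])
  qed
qed

lemma Kop_eval:
  assumes "J1 = diagop lam (Lmul qi)" and "J2 = diagop mu (Lmul qj)" and "J3 = diagop mu (Lmul qk)"
  shows "Kop J1 J2 J3 a b c y = (\<chi> s. qmult (vector [0, a * lam s, b * mu s, c * mu s]) (y$s))"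
  unfolding assms Kop_def diagop_def Lmul_def
  apply (subst vec_eq_iff) by (simp add: q_eq_iff qi_def qj_def qk_def algebra_simps)

lemma norm_u: "u3^2 + u4^2 = 1 \<Longrightarrow> norm (vector [0,0,u3,u4] :: real^4) = 1"
  using qnorm2[of "vector [0,0,u3,u4]"] norm_ge_zero[of "vector [0,0,u3,u4] :: real^4"]
  by (auto simp add: power2_eq_1_iff)

lemma conjK:
  assumes "J1 = diagop lam (Lmul qi)" and "J2 = diagop mu (Lmul qj)" and "J3 = diagop mu (Lmul qk)"
    and hu: "u3^2 + u4^2 = 1" and hv: "\<And>s. norm (v s) = 1"
  shows "Nop (vector [0,0,u3,u4]) v (Kop J1 J2 J3 a b c (Nop (qconj (vector [0,0,u3,u4])) (\<lambda>s. qconj (v s)) x))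
     = Kop J1 J2 J3 (-a) ((2*u3^2-1)*b + 2*u3*u4*c) (2*u3*u4*b - (2*u3^2-1)*c) x"
  unfolding Kop_eval[OF assms(1-3)] Nop_conj[OF norm_u[OF hu] hv] conj_u[OF hu]
  by (simp add: algebra_simps)

theorem mainTheorem4:
  fixes lam mu :: "'p::finite \<Rightarrow> real"
    and ip :: "(real^4^'p \<Rightarrow> real^4^'p) \<Rightarrow> (real^4^'p \<Rightarrow> real^4^'p) \<Rightarrow> real"
  assumes "\<forall>s. lam s \<noteq> 0" and "\<forall>s. mu s \<noteq> 0"
    and "J1 = diagop lam (Lmul qi)" and "J2 = diagop mu (Lmul qj)" and "J3 = diagop mu (Lmul qk)"
    and "V = {(\<lambda>x. a *\<^sub>R J1 x + b *\<^sub>R J2 x + c *\<^sub>R J3 x) | a b c. True}"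
    and "inner_product_on V ip"
    and "ip J1 J2 = 0" and "ip J1 J3 = 0" and "ip J2 J3 = 0"
    and "ip J2 J2 = ip J3 J3"
  shows "WS_pair V ip"
  unfolding WS_pair_def
proof (intro ballI allI)
  fix J and X :: "real^4^'p"
  assume "J \<in> V"
  then obtain a b c where Jd: "J = Kop J1 J2 J3 a b c" using assms(6) unfolding Kop_def by blast
  define r where "r = sqrt (b^2 + c^2)"
  define u3 where "u3 = (if b = 0 \<and> c = 0 then 1 else - c / r)"
  define u4 where "u4 = (if b = 0 \<and> c = 0 then 0 else b / r)"
  have hu: "u3^2 + u4^2 = 1" and hbc: "b * u3 + c * u4 = 0"
  proof -
    have "u3^2 + u4^2 = 1 \<and> b * u3 + c * u4 = 0"
    proof (cases "b = 0 \<and> c = 0")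
      case True then show ?thesis by (simp add: u3_def u4_def)
    next
      case False
      then have "b^2 + c^2 > 0" by (simp add: sum_power2_gt_zero_iff)
      then have r: "r > 0" "r^2 = b^2 + c^2" by (auto simp: r_def)
      have "u3^2 + u4^2 = (c^2 + b^2) / r^2" using False
        by (simp add: u3_def u4_def power_divide add_divide_distrib)
      also have "\<dots> = 1" using r False by (simp add: add.commute)
      finally have 1: "u3^2 + u4^2 = 1" .
      have "b * u3 + c * u4 = 0" using False by (simp add: u3_def u4_def)
      with 1 show ?thesis by simp
    qed
    then show "u3^2 + u4^2 = 1" "b * u3 + c * u4 = 0" by auto
  qed
  define u :: "real^4" where "u = vector [0,0,u3,u4]"
  have nu: "norm u = 1" unfolding u_def by (rule norm_u[OF hu])
  have uu: "qmult u u = - qone"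
    using hu by (simp add: u_def q_eq_iff power2_eq_square)
  have uu2: "qmult u (qmult u y) = - y" for y
    by (metis qmult_assoc uu qmult_minus(1) qmult_one(1))
  define v where "v = (\<lambda>s. if X$s = 0 then qone else (1/(norm (X$s))^2) *\<^sub>R qmult (qconj (X$s)) (qmult u (X$s)))"
  have nv: "norm (v s) = 1" for s
  proof (cases "X$s = 0")
    case True
    have "norm qone = 1" using qnorm2[of qone] norm_ge_zero[of qone] by (auto simp: power2_eq_1_iff)
    then show ?thesis using True by (simp add: v_def)
  next
    case False
    then have "norm (X$s) > 0" by simp
    then show ?thesis using False nu by (simp add: v_def qnorm_mult power2_eq_square)
  qed
  define N where "N = Nop u v"
  define N' where "N' = Nop (qconj u) (\<lambda>s. qconj (v s))"
  have NN': "N (N' x) = x" "N' (N x) = x" for x unfolding N_def N'_def using Nop_inv[of u v, OF nu nv] by auto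
  have invN: "inv N = N'"
    by (rule inv_unique_comp) (auto simp: NN')
  define al where "al = 2*u3^2-1"
  define be where "be = 2*u3*u4"
  have conjK': "N (Kop J1 J2 J3 a' b' c' (N' x)) = Kop J1 J2 J3 (-a') (al*b' + be*c') (be*b' - al*c') x" for a' b' c' x
    unfolding N_def N'_def u_def al_def be_def by (rule conjK[of J1 lam J2 mu J3 u3 u4 v, OF assms(3-5) hu nv])
  have V': "V = {Kop J1 J2 J3 a b c | a b c. True}" using assms(6) unfolding Kop_def by simp
  show "\<exists>N\<in>normalizer V ip. N X = - X \<and> (\<forall>Y. N (J Y) = - J (N Y))"
  proof (rule bexI[of _ N], intro conjI allI)
    have cK: "N \<circ> Kop J1 J2 J3 a' b' c' \<circ> inv N = Kop J1 J2 J3 (-a') (al*b' + be*c') (be*b' - al*c')" for a' b' c'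
      by (rule ext) (simp add: invN conjK')
    show "N \<in> normalizer V ip"
      unfolding normalizer_def
    proof (intro CollectI conjI ballI)
      show "orthogonal_transformation N" unfolding N_def by (rule Nop_orth[of u v, OF nu nv])
    next
      fix K assume "K \<in> V"
      then have "\<exists>a' b' c'. K = Kop J1 J2 J3 a' b' c'" unfolding V' by simp
      then obtain a' b' c' where K: "K = Kop J1 J2 J3 a' b' c'" by blast
      show "N \<circ> K \<circ> inv N \<in> V" unfolding K cK V' by (rule CollectI, rule exI[of _ "-a'"], rule exI[of _ "al*b' + be*c'"], rule exI[of _ "be*b' - al*c'"], simp)
    next
      fix K K' assume "K \<in> V" "K' \<in> V"
      then have "\<exists>a' b' c'. K = Kop J1 J2 J3 a' b' c'" "\<exists>a' b' c'. K' = Kop J1 J2 J3 a' b' c'" unfolding V' by simp_all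
      then obtain a' b' c' a'' b'' c'' where K: "K = Kop J1 J2 J3 a' b' c'" and K': "K' = Kop J1 J2 J3 a'' b'' c''" by blast
      have ab: "al^2 + be^2 = 1" unfolding al_def be_def using hu
        by (simp add: power2_eq_square) algebra
      have i1: "ip (Kop J1 J2 J3 (-a') (al*b'+be*c') (be*b'-al*c')) (Kop J1 J2 J3 (-a'') (al*b''+be*c'') (be*b''-al*c''))
         = (-a')*(-a'') * ip J1 J1 + ((al*b'+be*c')*(al*b''+be*c'') + (be*b'-al*c')*(be*b''-al*c'')) * ip J2 J2"
        by (rule ip_formula[of V J1 J2 J3 ip, OF assms(6-11)])
      have i2: "ip (Kop J1 J2 J3 a' b' c') (Kop J1 J2 J3 a'' b'' c'') = a'*a'' * ip J1 J1 + (b'*b''+c'*c'') * ip J2 J2"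
        by (rule ip_formula[of V J1 J2 J3 ip, OF assms(6-11)])
      have ar: "(al*b'+be*c')*(al*b''+be*c'') + (be*b'-al*c')*(be*b''-al*c'') = b'*b''+c'*c''"
        using ab by (simp add: power2_eq_square) algebra
      show "ip (N \<circ> K \<circ> inv N) (N \<circ> K' \<circ> inv N) = ip K K'"
        unfolding K K' cK i1 i2 ar by simp
    qed
    show "N X = - X"
    proof (subst vec_eq_iff, intro allI)
      fix s
      show "N X $ s = (- X) $ s"
      proof (cases "X$s = 0")
        case True then show ?thesis by (simp add: N_def Nop_def v_def)
      next
        case False
        then have "norm (X$s) \<noteq> 0" by simp
        then show ?thesis using False
          by (simp add: N_def Nop_def v_def qmult_assoc qmult_conj_cancel uu2)
      qed
    qed
    fix Y
    have "N (J Y) = N (J (N' (N Y)))" by (simp add: NN')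
    also have "\<dots> = Kop J1 J2 J3 (-a) (-b) (-c) (N Y)"
    proof -
      have "al*b + be*c = -b" "be*b - al*c = -c" unfolding al_def be_def using hu hbc
        by (simp_all add: power2_eq_square) algebra+
      then show ?thesis unfolding Jd conjK' by simp
    qed
    also have "\<dots> = - J (N Y)" by (simp add: Jd Kop_def algebra_simps)
    finally show "N (J Y) = - J (N Y)" .
  qed
qed

end
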